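(* Let $i\ge1$, $i+1\le k\le 2^i$, and let $f:[k-1]\to\mathcal{P}([i])\setminus\{\emptyset\}$ be an $(i,k)$-prototype. Suppose there exist $n\ge1$ and a partition $\pi=\{P_1,\dots,P_k\}$ of $[n+1]$ into $k$ nonempty blocks such that the set of hyperplanes $\{H_{A_1},\dots,H_{A_i}\}$, where $(A_1,\dots,A_i)=A_{f,\pi}$, is a broken circuit of $\mathcal{A}_n$ with respect to the binary order. Then for every $\tilde n\ge1$ and every partition $\tilde\pi=\{\tilde P_1,\dots,\tilde P_k\}$ of $[\tilde n+1]$ into $k$ nonempty blocks, the set $\{H_{\tilde A_1},\dots,H_{\tilde A_i}\}$ with $(\tilde A_1,\dots,\tilde A_i)=A_{f,\tilde\pi}$ is a broken circuit of $\mathcal{A}_{\tilde n}$ with respect to the binary order.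
   Context: For $n\ge1$, $\mathcal{A}_n$ is the resonance arrangement in $\mathbb{R}^n$ of hyperplanes $H_I=\{x:\sum_{i\in I}x_i=0\}$, $\emptyset\ne I\subseteq[n]$. Binary order: a subset $I$ of a set of positive integers is encoded as $\sum_{j\in I}2^j$, and subsets (and hyperplanes $H_I$) are linearly ordered by this number. A circuit of an arrangement is a minimally linearly dependent set of hyperplanes (i.e. of their normal vectors); a broken circuit is $C\setminus\{H\}$ where $C$ is a circuit and $H$ its largest element in the fixed order. An $(i,k)$-prototype is an injective map $f:[k-1]\to\mathcal{P}([i])\setminus\{\emptyset\}$; its building blocks are $I^f_j=\{\ell\in[k-1]: j\in f(\ell)\}$ for $1\le j\le i$. Given a partition $\pi$ of $[n+1]$ into $k$ blocks, the blocks are labeled $P_1,\dots,P_k$ increasingly in the binary order (so $n+1\in P_k$), and $A_{f,\pi}=(A_1,\dots,A_i)$ with $A_j=\bigcup_{\ell\in I^f_j}P_\ell\subseteq[n]$. *)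

theory Defs
  imports Complex_Main
begin

text \<open>Hyperplane H_I of the resonance arrangement A_n is identified with its index set I
  (distinct I give distinct hyperplanes). Its normal vector is the 0/1 indicator vector of I
  in R^n, represented as a function nat => real supported on {1..n}.\<close>

definition normal_vec :: "nat set \<Rightarrow> nat \<Rightarrow> real" where
  "normal_vec I = (\<lambda>j. if j \<in> I then 1 else 0)"

definition is_hyperplane :: "nat \<Rightarrow> nat set \<Rightarrow> bool" where
  "is_hyperplane n I \<longleftrightarrow> I \<noteq> {} \<and> I \<subseteq> {1..n}"

definition lin_dep :: "nat set set \<Rightarrow> bool" where
  "lin_dep S \<longleftrightarrow> (\<exists>c :: nat set \<Rightarrow> real. (\<exists>I\<in>S. c I \<noteq> 0) \<and>
       (\<forall>j. (\<Sum>I\<in>S. c I * normal_vec I j) = 0))"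

definition is_circuit :: "nat \<Rightarrow> nat set set \<Rightarrow> bool" where
  "is_circuit n C \<longleftrightarrow> (\<forall>I\<in>C. is_hyperplane n I) \<and> lin_dep C \<and>
       (\<forall>D. D \<subset> C \<longrightarrow> \<not> lin_dep D)"

definition bin_code :: "nat set \<Rightarrow> nat" where
  "bin_code I = (\<Sum>j\<in>I. 2 ^ j)"

definition is_broken_circuit :: "nat \<Rightarrow> nat set set \<Rightarrow> bool" where
  "is_broken_circuit n B \<longleftrightarrow> (\<exists>C H. is_circuit n C \<and> H \<in> C \<and>
       (\<forall>H'\<in>C. bin_code H' \<le> bin_code H) \<and> B = C - {H})"

definition is_prototype :: "nat \<Rightarrow> nat \<Rightarrow> (nat \<Rightarrow> nat set) \<Rightarrow> bool" where
  "is_prototype i k f \<longleftrightarrow> inj_on f {1..k-1} \<and>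
       (\<forall>l\<in>{1..k-1}. f l \<noteq> {} \<and> f l \<subseteq> {1..i})"

definition building_block :: "(nat \<Rightarrow> nat set) \<Rightarrow> nat \<Rightarrow> nat \<Rightarrow> nat set" where
  "building_block f k j = {l \<in> {1..k-1}. j \<in> f l}"

definition is_partition_k :: "nat set \<Rightarrow> nat \<Rightarrow> nat set set \<Rightarrow> bool" where
  "is_partition_k X k \<pi> \<longleftrightarrow> (\<forall>P\<in>\<pi>. P \<noteq> {}) \<and> \<Union>\<pi> = X \<and>
       (\<forall>P\<in>\<pi>. \<forall>Q\<in>\<pi>. P \<noteq> Q \<longrightarrow> P \<inter> Q = {}) \<and> finite \<pi> \<and> card \<pi> = k"

text \<open>The l-th block (1-indexed) in increasing binary order.\<close>
definition block :: "nat set set \<Rightarrow> nat \<Rightarrow> nat set" where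
  "block \<pi> l = (THE P. P \<in> \<pi> \<and> card {Q \<in> \<pi>. bin_code Q < bin_code P} = l - 1)"

definition A_set :: "(nat \<Rightarrow> nat set) \<Rightarrow> nat \<Rightarrow> nat set set \<Rightarrow> nat \<Rightarrow> nat set" where
  "A_set f k \<pi> j = (\<Union>l\<in>building_block f k j. block \<pi> l)"

definition A_hyps :: "(nat \<Rightarrow> nat set) \<Rightarrow> nat \<Rightarrow> nat \<Rightarrow> nat set set \<Rightarrow> nat set set" where
  "A_hyps f i k \<pi> = A_set f k \<pi> ` {1..i}"

end

theory Submission
  imports Defs
begin


lemma geom_lt: "(\<Sum>j<m. (2::nat)^j) < 2^m"
  by (induction m) auto

lemma bc_lt_pow:
  assumes "finite A" "\<forall>x\<in>A. x < m" shows "bin_code A < 2^m"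
proof -
  have "A \<subseteq> {..<m}" using assms by auto
  hence "bin_code A \<le> (\<Sum>j<m. (2::nat)^j)" unfolding bin_code_def
    by (intro sum_mono2) auto
  thus ?thesis using geom_lt[of m] by linarith
qed

lemma pow_le_bc: "finite B \<Longrightarrow> m \<in> B \<Longrightarrow> 2^m \<le> bin_code B"
  unfolding bin_code_def by (rule member_le_sum) auto

lemma superinc:
  fixes w :: "nat \<Rightarrow> nat"
  assumes U: "finite U" and sup: "\<forall>x\<in>U. (\<Sum>y\<in>{y\<in>U. y<x}. w y) < w x"
    and AB: "A \<subseteq> U" "B \<subseteq> U" "A \<noteq> B"
  shows "(sum w A < sum w B) \<longleftrightarrow> Max ((A-B)\<union>(B-A)) \<in> B"
proof -
  have key: "sum w A' < sum w B'" if "A' \<subseteq> U" "B' \<subseteq> U" and D: "(A'-B')\<union>(B'-A') = (A-B)\<union>(B-A)"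
     and m: "Max ((A-B)\<union>(B-A)) \<in> B' - A'" for A' B'
  proof -
    let ?m = "Max ((A-B)\<union>(B-A))"
    have fD: "finite ((A-B)\<union>(B-A))" using AB U finite_subset by blast
    have fA: "finite A'" "finite B'" using that U finite_subset by blast+
    have sub: "A' - B' \<subseteq> {y\<in>U. y < ?m}"
    proof
      fix y assume y: "y \<in> A' - B'"
      hence "y \<le> ?m" using D fD by (metis Max_ge UnI1)
      moreover have "y \<noteq> ?m" using y m by auto
      ultimately show "y \<in> {y\<in>U. y < ?m}" using y that by auto
    qed
    have "sum w (A' - B') \<le> (\<Sum>y\<in>{y\<in>U. y<?m}. w y)"
      using sub U by (intro sum_mono2) auto
    also have "\<dots> < w ?m" using sup m that by auto
    also have "\<dots> \<le> sum w (B' - A')" using m fA by (intro member_le_sum) auto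
    finally have lt: "sum w (A' - B') < sum w (B' - A')" .
    have "sum w A' = sum w (A' \<inter> B') + sum w (A' - B')" using fA sum.Int_Diff by blast
    moreover have "sum w B' = sum w (A' \<inter> B') + sum w (B' - A')"
      using fA sum.Int_Diff[of B' w A'] by (simp add: Int_commute)
    ultimately show ?thesis using lt by linarith
  qed
  have ne: "(A-B)\<union>(B-A) \<noteq> {}" using AB by auto
  have fD: "finite ((A-B)\<union>(B-A))" using AB U finite_subset by blast
  have mem: "Max ((A-B)\<union>(B-A)) \<in> (A-B)\<union>(B-A)" using Max_in[OF fD ne] .
  show ?thesis
  proof
    assume lt: "sum w A < sum w B"
    show "Max ((A-B)\<union>(B-A)) \<in> B"
    proof (rule ccontr)
      assume "Max ((A-B)\<union>(B-A)) \<notin> B"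
      hence "Max ((A-B)\<union>(B-A)) \<in> A - B" using mem by auto
      hence "sum w B < sum w A" using key[of B A] AB by (auto simp: Un_commute)
      thus False using lt by simp
    qed
  next
    assume "Max ((A-B)\<union>(B-A)) \<in> B"
    hence "Max ((A-B)\<union>(B-A)) \<in> B - A" using mem by auto
    thus "sum w A < sum w B" using key[of A B] AB by auto
  qed
qed




definition UU :: "nat set set \<Rightarrow> nat set \<Rightarrow> nat set" where
  "UU \<pi> L = (\<Union>l\<in>L. block \<pi> l)"

locale bsys =
  fixes n k :: nat and \<pi> :: "nat set set"
  assumes part: "is_partition_k {1..n+1} k \<pi>"
begin

lemma fin_pi: "finite \<pi>" and card_pi: "card \<pi> = k" and ne: "P\<in>\<pi> \<Longrightarrow> P\<noteq>{}"
  and sub: "P\<in>\<pi> \<Longrightarrow> P \<subseteq> {1..n+1}" and disj: "P\<in>\<pi> \<Longrightarrow> Q\<in>\<pi> \<Longrightarrow> P\<noteq>Q \<Longrightarrow> P\<inter>Q={}"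
  using part unfolding is_partition_k_def by auto

lemma finP: "P\<in>\<pi> \<Longrightarrow> finite P" using sub finite_subset by blast

lemma Max_ne: "P\<in>\<pi> \<Longrightarrow> Q\<in>\<pi> \<Longrightarrow> P\<noteq>Q \<Longrightarrow> Max P \<noteq> Max Q"
proof -
  assume a: "P\<in>\<pi>" "Q\<in>\<pi>" "P\<noteq>Q"
  have "Max P \<in> P" "Max Q \<in> Q" using Max_in[OF finP ne] a by auto
  thus ?thesis using disj[OF a] by auto
qed

lemma bc_lt_Max: assumes "P\<in>\<pi>" "Q\<in>\<pi>" "Max P < Max Q" shows "bin_code P < bin_code Q"
proof -
  have "bin_code P < 2 ^ Max Q"
    using assms finP[of P] by (intro bc_lt_pow) (auto dest: Max_ge[OF finP[OF assms(1)]])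
  also have "\<dots> \<le> bin_code Q" using pow_le_bc[OF finP Max_in[OF finP ne]] assms by auto
  finally show ?thesis .
qed

lemma bc_inj: "P\<in>\<pi> \<Longrightarrow> Q\<in>\<pi> \<Longrightarrow> P\<noteq>Q \<Longrightarrow> bin_code P \<noteq> bin_code Q"
proof -
  assume a: "P\<in>\<pi>" "Q\<in>\<pi>" "P\<noteq>Q"
  hence "Max P < Max Q \<or> Max Q < Max P" using Max_ne by (meson linorder_neqE_nat)
  thus ?thesis using bc_lt_Max a by (metis less_irrefl)
qed

definition rk where "rk P = card {Q\<in>\<pi>. bin_code Q < bin_code P}"

lemma rk_lt: assumes "P\<in>\<pi>" shows "rk P < k"
proof -
  have "{Q\<in>\<pi>. bin_code Q < bin_code P} \<subseteq> \<pi> - {P}" by auto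
  hence "rk P \<le> card (\<pi> - {P})" unfolding rk_def using fin_pi by (intro card_mono) auto
  also have "\<dots> = k - 1" using assms fin_pi card_pi by simp
  finally have "rk P \<le> k - 1" .
  moreover have "k > 0" using assms fin_pi card_pi card_gt_0_iff by blast
  ultimately show ?thesis by linarith
qed

lemma rk_mono: assumes "P\<in>\<pi>" "Q\<in>\<pi>" "bin_code P < bin_code Q" shows "rk P < rk Q"
  unfolding rk_def
proof (intro psubset_card_mono)
  show "finite {Qa \<in> \<pi>. bin_code Qa < bin_code Q}" using fin_pi by simp
  have "{Q \<in> \<pi>. bin_code Q < bin_code P} \<subseteq> {Qa \<in> \<pi>. bin_code Qa < bin_code Q}"
    using assms(3) by auto
  moreover have "P \<in> {Qa \<in> \<pi>. bin_code Qa < bin_code Q}" "P \<notin> {Q \<in> \<pi>. bin_code Q < bin_code P}"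
    using assms by auto
  ultimately show "{Q \<in> \<pi>. bin_code Q < bin_code P} \<subset> {Qa \<in> \<pi>. bin_code Qa < bin_code Q}" by blast
qed

lemma rk_inj: "inj_on rk \<pi>"
proof (rule inj_onI, rule ccontr)
  fix P Q assume a: "P\<in>\<pi>" "Q\<in>\<pi>" "rk P = rk Q" "P\<noteq>Q"
  hence "bin_code P < bin_code Q \<or> bin_code Q < bin_code P" using bc_inj by (meson linorder_neqE_nat)
  thus False using rk_mono a by (metis less_irrefl)
qed

lemma rk_surj: "rk ` \<pi> = {0..<k}"
proof (rule card_subset_eq)
  show "rk ` \<pi> \<subseteq> {0..<k}" using rk_lt by auto
  show "card (rk ` \<pi>) = card {0..<k}" using card_pi card_image[OF rk_inj] by simp
qed simp

lemma block_spec: assumes "l\<in>{1..k}" shows "block \<pi> l \<in> \<pi> \<and> rk (block \<pi> l) = l - 1"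
proof -
  have "\<exists>!P. P\<in>\<pi> \<and> rk P = l - 1"
  proof -
    have "l - 1 \<in> rk ` \<pi>" using rk_surj assms by auto
    then obtain P where "P\<in>\<pi>" "rk P = l - 1" by auto
    moreover have "\<And>Q. Q\<in>\<pi> \<Longrightarrow> rk Q = l - 1 \<Longrightarrow> Q = P"
      using rk_inj calculation by (metis inj_onD)
    ultimately show ?thesis by blast
  qed
  from theI'[OF this] show ?thesis unfolding block_def rk_def[symmetric] .
qed

lemma block_in: "l\<in>{1..k} \<Longrightarrow> block \<pi> l \<in> \<pi>" using block_spec by blast

lemma block_bc_mono: assumes "l\<in>{1..k}" "m\<in>{1..k}" "l<m"
  shows "bin_code (block \<pi> l) < bin_code (block \<pi> m)"
proof (rule ccontr)
  assume "\<not> ?thesis"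
  hence "bin_code (block \<pi> m) < bin_code (block \<pi> l) \<or> bin_code (block \<pi> m) = bin_code (block \<pi> l)" by auto
  thus False
  proof
    assume "bin_code (block \<pi> m) < bin_code (block \<pi> l)"
    hence "rk (block \<pi> m) < rk (block \<pi> l)" using rk_mono block_in assms by blast
    thus False using block_spec assms by auto
  next
    assume "bin_code (block \<pi> m) = bin_code (block \<pi> l)"
    hence "block \<pi> m = block \<pi> l" using bc_inj block_in assms by blast
    thus False using block_spec[OF assms(1)] block_spec[OF assms(2)] assms by auto
  qed
qed

lemma block_neq: "l\<in>{1..k} \<Longrightarrow> m\<in>{1..k} \<Longrightarrow> l\<noteq>m \<Longrightarrow> block \<pi> l \<noteq> block \<pi> m"
proof -
  assume a: "l\<in>{1..k}" "m\<in>{1..k}" "l\<noteq>m"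
  hence "l<m \<or> m<l" by auto
  thus ?thesis using block_bc_mono a by (metis less_irrefl)
qed

lemma block_disj: "l\<in>{1..k} \<Longrightarrow> m\<in>{1..k} \<Longrightarrow> l\<noteq>m \<Longrightarrow> block \<pi> l \<inter> block \<pi> m = {}"
  using block_neq block_in disj by blast

lemma block_ne: "l\<in>{1..k} \<Longrightarrow> block \<pi> l \<noteq> {}" using block_in ne by blast
lemma block_fin: "l\<in>{1..k} \<Longrightarrow> finite (block \<pi> l)" using block_in finP by blast

lemma block_Max_mono: assumes "l\<in>{1..k}" "m\<in>{1..k}" "l<m"
  shows "Max (block \<pi> l) < Max (block \<pi> m)"
proof (rule ccontr)
  assume "\<not> ?thesis"
  moreover have "Max (block \<pi> l) \<noteq> Max (block \<pi> m)"
    using Max_ne[OF block_in[OF assms(1)] block_in[OF assms(2)] block_neq[OF assms(1,2)]] assms(3) by simp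
  ultimately have "Max (block \<pi> m) < Max (block \<pi> l)" by auto
  hence "bin_code (block \<pi> m) < bin_code (block \<pi> l)" using bc_lt_Max block_in assms by blast
  thus False using block_bc_mono[OF assms] by auto
qed

lemma block_sub: assumes "l\<in>{1..k-1}" shows "block \<pi> l \<subseteq> {1..n}"
proof
  fix x assume x: "x \<in> block \<pi> l"
  have l: "l\<in>{1..k}" "k\<in>{1..k}" "l<k" using assms by auto
  have "x \<le> Max (block \<pi> l)" using x block_fin[OF l(1)] by simp
  also have "\<dots> < Max (block \<pi> k)" using block_Max_mono l by blast
  also have "\<dots> \<le> n+1" using Max_in[OF block_fin[OF l(2)] block_ne[OF l(2)]] sub[OF block_in[OF l(2)]] by auto
  finally have "x < n + 1" .
  moreover have "x \<ge> 1" using sub[OF block_in[OF l(1)]] x by auto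
  ultimately show "x \<in> {1..n}" by simp
qed

end



context bsys begin

lemma U_mem: "j \<in> UU \<pi> L \<longleftrightarrow> (\<exists>l\<in>L. j \<in> block \<pi> l)" by (simp add: UU_def)

lemma idx1: "l\<in>{1..k-1} \<Longrightarrow> l \<in> {1..k}" by (cases k) auto
lemma idx2: "L \<subseteq> {1..k-1} \<Longrightarrow> l \<in> L \<Longrightarrow> l \<in> {1..k}" using idx1 by blast

lemma U_nv: assumes L: "L \<subseteq> {1..k-1}" and l: "l\<in>{1..k-1}" and j: "j \<in> block \<pi> l"
  shows "normal_vec (UU \<pi> L) j = normal_vec L l"
proof -
  have "j \<in> UU \<pi> L \<longleftrightarrow> l \<in> L"
  proof
    assume "j \<in> UU \<pi> L"
    then obtain l' where l': "l'\<in>L" "j \<in> block \<pi> l'" unfolding U_mem by blast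
    show "l \<in> L"
    proof (rule ccontr)
      assume "l \<notin> L"
      hence "l \<noteq> l'" using l' by blast
      moreover have "l' \<in> {1..k}" using idx2[OF L l'(1)] .
      ultimately have "block \<pi> l \<inter> block \<pi> l' = {}" using block_disj idx1[OF l] by blast
      thus False using j l' by blast
    qed
  next
    assume "l \<in> L" thus "j \<in> UU \<pi> L" using j U_mem by blast
  qed
  thus ?thesis unfolding normal_vec_def by simp
qed

lemma U_nv0: assumes "L \<subseteq> {1..k-1}" "\<forall>l\<in>{1..k-1}. j \<notin> block \<pi> l"
  shows "normal_vec (UU \<pi> L) j = 0"
proof -
  have "j \<notin> UU \<pi> L" using assms U_mem by blast
  thus ?thesis unfolding normal_vec_def by simp
qed

lemma U_inj: "inj_on (UU \<pi>) (Pow {1..k-1})"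
proof (rule inj_onI)
  have *: "l \<in> M" if "L \<subseteq> {1..k-1}" "M \<subseteq> {1..k-1}" "UU \<pi> L = UU \<pi> M" "l \<in> L" for L M l
  proof -
    have l: "l \<in> {1..k-1}" using that by blast
    obtain j where j: "j \<in> block \<pi> l" using block_ne[OF idx1[OF l]] by blast
    have "normal_vec (UU \<pi> L) j = normal_vec L l" using U_nv[OF that(1) l j] .
    moreover have "normal_vec (UU \<pi> M) j = normal_vec M l" using U_nv[OF that(2) l j] .
    ultimately show ?thesis using that unfolding normal_vec_def by (auto split: if_splits)
  qed
  fix L M assume "L \<in> Pow {1..k-1}" "M \<in> Pow {1..k-1}" "UU \<pi> L = UU \<pi> M"
  thus "L = M" using *[of L M] *[of M L] by blast
qed

lemma U_empty: assumes "L \<subseteq> {1..k-1}" shows "UU \<pi> L = {} \<longleftrightarrow> L = {}"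
proof
  assume e: "UU \<pi> L = {}"
  show "L = {}"
  proof (rule ccontr)
    assume "L \<noteq> {}"
    then obtain l where l: "l \<in> L" by blast
    hence "l \<in> {1..k}" using idx2[OF assms] by blast
    then obtain j where "j \<in> block \<pi> l" using block_ne by blast
    thus False using e l U_mem by blast
  qed
qed (simp add: UU_def)

lemma U_sub: assumes "L \<subseteq> {1..k-1}" shows "UU \<pi> L \<subseteq> {1..n}"
proof
  fix j assume "j \<in> UU \<pi> L"
  then obtain l where "l \<in> L" "j \<in> block \<pi> l" using U_mem by blast
  thus "j \<in> {1..n}" using block_sub assms by blast
qed

lemma U_bc: assumes L: "L \<subseteq> {1..k-1}"
  shows "bin_code (UU \<pi> L) = (\<Sum>l\<in>L. bin_code (block \<pi> l))"
  unfolding bin_code_def UU_def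
proof (rule sum.UNION_disjoint)
  show "finite L" using L finite_subset by blast
  show "\<forall>i\<in>L. finite (block \<pi> i)" using idx2[OF L] block_fin by blast
  show "\<forall>i\<in>L. \<forall>j\<in>L. i \<noteq> j \<longrightarrow> block \<pi> i \<inter> block \<pi> j = {}"
  proof (intro ballI impI)
    fix i j assume "i\<in>L" "j\<in>L" "i\<noteq>j"
    moreover have "i \<in> {1..k}" "j \<in> {1..k}" using idx2[OF L] \<open>i\<in>L\<close> \<open>j\<in>L\<close> by blast+
    ultimately show "block \<pi> i \<inter> block \<pi> j = {}" using block_disj by blast
  qed
qed

lemma U_order: assumes L: "L \<subseteq> {1..k-1}" and M: "M \<subseteq> {1..k-1}"
  shows "bin_code (UU \<pi> L) \<le> bin_code (UU \<pi> M) \<longleftrightarrow> bin_code L \<le> bin_code M"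
proof (cases "L = M")
  case True thus ?thesis by simp
next
  case False
  let ?U = "{1..k-1}"
  let ?w = "\<lambda>l. bin_code (block \<pi> l)"
  have sup1: "\<forall>x\<in>?U. (\<Sum>y\<in>{y\<in>?U. y<x}. ?w y) < ?w x"
  proof
    fix x assume x: "x \<in> ?U"
    have sub: "{y\<in>?U. y<x} \<subseteq> ?U" by blast
    have "(\<Sum>y\<in>{y\<in>?U. y<x}. ?w y) = bin_code (UU \<pi> {y\<in>?U. y<x})"
      using U_bc[OF sub] by (rule sym)
    also have "\<dots> < 2 ^ Max (block \<pi> x)"
    proof (rule bc_lt_pow)
      show "finite (UU \<pi> {y \<in> ?U. y < x})" by (rule finite_subset[OF U_sub[OF sub]]) simp
      show "\<forall>z\<in>UU \<pi> {y \<in> ?U. y < x}. z < Max (block \<pi> x)"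
      proof
        fix z assume "z \<in> UU \<pi> {y \<in> ?U. y < x}"
        then obtain y where y: "y \<in> ?U" "y < x" "z \<in> block \<pi> y" unfolding U_mem by blast
        have yk: "y \<in> {1..k}" "x \<in> {1..k}" using idx1 y x by blast+
        have "z \<le> Max (block \<pi> y)" using y block_fin[OF yk(1)] by simp
        also have "\<dots> < Max (block \<pi> x)" using block_Max_mono[OF yk y(2)] .
        finally show "z < Max (block \<pi> x)" .
      qed
    qed
    also have "\<dots> \<le> ?w x" using pow_le_bc[OF block_fin[OF idx1[OF x]] Max_in[OF block_fin[OF idx1[OF x]] block_ne[OF idx1[OF x]]]] .
    finally show "(\<Sum>y\<in>{y\<in>?U. y<x}. ?w y) < ?w x" .
  qed
  have sup2: "\<forall>x\<in>?U. (\<Sum>y\<in>{y\<in>?U. y<x}. (\<lambda>j. (2::nat)^j) y) < 2 ^ x"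
  proof
    fix x assume "x \<in> ?U"
    have "bin_code {y\<in>?U. y<x} < 2 ^ x" by (rule bc_lt_pow) simp_all
    thus "(\<Sum>y\<in>{y\<in>?U. y<x}. (\<lambda>j. (2::nat)^j) y) < 2 ^ x" unfolding bin_code_def by simp
  qed
  have ne: "M \<noteq> L" using False by blast
  have fU: "finite ?U" by simp
  have e1': "sum ?w M < sum ?w L \<longleftrightarrow> Max ((M-L)\<union>(L-M)) \<in> L"
    by (rule superinc[OF fU sup1 M L ne])
  have e1: "bin_code (UU \<pi> M) < bin_code (UU \<pi> L) \<longleftrightarrow> Max ((M-L)\<union>(L-M)) \<in> L"
    using e1' unfolding U_bc[OF L] U_bc[OF M] .
  have e2': "sum (\<lambda>j. (2::nat)^j) M < sum (\<lambda>j. (2::nat)^j) L \<longleftrightarrow> Max ((M-L)\<union>(L-M)) \<in> L"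
    by (rule superinc[OF fU sup2 M L ne])
  have e2: "bin_code M < bin_code L \<longleftrightarrow> Max ((M-L)\<union>(L-M)) \<in> L"
    using e2' unfolding bin_code_def .
  show ?thesis unfolding not_less[symmetric] using e1 e2 by blast
qed


end



context bsys begin

lemma U_lindep:
  assumes S: "S \<subseteq> Pow {1..k-1}"
  shows "lin_dep (UU \<pi> ` S) \<longleftrightarrow> lin_dep S"
proof -
  have inj: "inj_on (UU \<pi>) S" using U_inj S by (rule inj_on_subset)
  have reidx: "(\<Sum>I\<in>UU \<pi> ` S. c I * normal_vec I j) = (\<Sum>L\<in>S. c (UU \<pi> L) * normal_vec (UU \<pi> L) j)"
    for c :: "nat set \<Rightarrow> real" and j
    using inj by (simp add: sum.reindex)
  have nv0: "normal_vec L l = 0" if "L \<in> S" "l \<notin> {1..k-1}" for L l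
  proof -
    have "l \<notin> L" using S that by blast
    thus ?thesis by (simp add: normal_vec_def)
  qed
  show ?thesis
  proof
    assume "lin_dep (UU \<pi> ` S)"
    then obtain c where c1: "\<exists>I\<in>UU \<pi> ` S. c I \<noteq> 0"
      and c2: "\<forall>j. (\<Sum>I\<in>UU \<pi> ` S. c I * normal_vec I j) = 0" unfolding lin_dep_def by blast
    show "lin_dep S" unfolding lin_dep_def
    proof (intro exI[of _ "\<lambda>L. c (UU \<pi> L)"] conjI allI)
      show "\<exists>I\<in>S. c (UU \<pi> I) \<noteq> 0" using c1 by blast
      fix l
      show "(\<Sum>L\<in>S. c (UU \<pi> L) * normal_vec L l) = 0"
      proof (cases "l \<in> {1..k-1}")
        case True
        then obtain j where j: "j \<in> block \<pi> l" using block_ne[OF idx1[OF True]] by blast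
        have "(\<Sum>L\<in>S. c (UU \<pi> L) * normal_vec L l) = (\<Sum>L\<in>S. c (UU \<pi> L) * normal_vec (UU \<pi> L) j)"
        proof (rule sum.cong)
          fix L assume "L \<in> S"
          hence "L \<subseteq> {1..k-1}" using S by blast
          thus "c (UU \<pi> L) * normal_vec L l = c (UU \<pi> L) * normal_vec (UU \<pi> L) j"
            using U_nv[OF _ True j] by simp
        qed simp
        also have "\<dots> = 0" using c2 reidx by metis
        finally show ?thesis .
      next
        case False thus ?thesis using nv0 by simp
      qed
    qed
  next
    assume "lin_dep S"
    then obtain c where c1: "\<exists>I\<in>S. c I \<noteq> 0"
      and c2: "\<forall>l. (\<Sum>L\<in>S. c L * normal_vec L l) = 0" unfolding lin_dep_def by blast
    define c' where "c' I = c (the_inv_into S (UU \<pi>) I)" for I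
    have c'U: "c' (UU \<pi> L) = c L" if "L \<in> S" for L
      unfolding c'_def using the_inv_into_f_f[OF inj that] by simp
    show "lin_dep (UU \<pi> ` S)" unfolding lin_dep_def
    proof (intro exI[of _ c'] conjI allI)
      show "\<exists>I\<in>UU \<pi> ` S. c' I \<noteq> 0" using c1 c'U by auto
      fix j
      have "(\<Sum>I\<in>UU \<pi> ` S. c' I * normal_vec I j) = (\<Sum>L\<in>S. c L * normal_vec (UU \<pi> L) j)"
        unfolding reidx using c'U by (intro sum.cong) auto
      also have "\<dots> = 0"
      proof (cases "\<exists>l\<in>{1..k-1}. j \<in> block \<pi> l")
        case True
        then obtain l where l: "l \<in> {1..k-1}" "j \<in> block \<pi> l" by blast
        have "(\<Sum>L\<in>S. c L * normal_vec (UU \<pi> L) j) = (\<Sum>L\<in>S. c L * normal_vec L l)"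
        proof (rule sum.cong)
          fix L assume "L \<in> S"
          hence "L \<subseteq> {1..k-1}" using S by blast
          thus "c L * normal_vec (UU \<pi> L) j = c L * normal_vec L l"
            using U_nv[OF _ l] by simp
        qed simp
        also have "\<dots> = 0" using c2 by simp
        finally show ?thesis .
      next
        case False
        have "c L * normal_vec (UU \<pi> L) j = 0" if "L \<in> S" for L
        proof -
          have "L \<subseteq> {1..k-1}" using S that by blast
          thus ?thesis using U_nv0 False by simp
        qed
        thus ?thesis by (intro sum.neutral) blast
      qed
      finally show "(\<Sum>I\<in>UU \<pi> ` S. c' I * normal_vec I j) = 0" .
    qed
  qed
qed

lemma U_circuit:
  assumes S: "S \<subseteq> Pow {1..k-1}"
  shows "is_circuit n (UU \<pi> ` S) \<longleftrightarrow> ({} \<notin> S \<and> lin_dep S \<and> (\<forall>D. D \<subset> S \<longrightarrow> \<not> lin_dep D))"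
proof
  assume C: "is_circuit n (UU \<pi> ` S)"
  have "{} \<notin> S"
  proof
    assume "{} \<in> S"
    hence "is_hyperplane n (UU \<pi> {})" using C unfolding is_circuit_def by blast
    thus False unfolding is_hyperplane_def UU_def by simp
  qed
  moreover have "lin_dep S" using C U_lindep[OF S] unfolding is_circuit_def by blast
  moreover have "\<not> lin_dep D" if D: "D \<subset> S" for D
  proof -
    have DS: "D \<subseteq> Pow {1..k-1}" using D S by blast
    have inj: "inj_on (UU \<pi>) S" using U_inj S by (rule inj_on_subset)
    have "UU \<pi> ` D \<subset> UU \<pi> ` S"
    proof
      show "UU \<pi> ` D \<subseteq> UU \<pi> ` S" using D by blast
      obtain L where L: "L \<in> S" "L \<notin> D" using D by blast
      have "UU \<pi> L \<notin> UU \<pi> ` D"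
      proof
        assume "UU \<pi> L \<in> UU \<pi> ` D"
        then obtain M where "M \<in> D" "UU \<pi> M = UU \<pi> L" by blast
        hence "M = L" using inj D L by (meson inj_onD psubsetD)
        thus False using L \<open>M \<in> D\<close> by blast
      qed
      thus "UU \<pi> ` D \<noteq> UU \<pi> ` S" using L by blast
    qed
    hence "\<not> lin_dep (UU \<pi> ` D)" using C unfolding is_circuit_def by blast
    thus ?thesis using U_lindep[OF DS] by blast
  qed
  ultimately show "{} \<notin> S \<and> lin_dep S \<and> (\<forall>D. D \<subset> S \<longrightarrow> \<not> lin_dep D)" by blast
next
  assume R: "{} \<notin> S \<and> lin_dep S \<and> (\<forall>D. D \<subset> S \<longrightarrow> \<not> lin_dep D)"
  show "is_circuit n (UU \<pi> ` S)" unfolding is_circuit_def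
  proof (intro conjI allI impI ballI)
    fix I assume "I \<in> UU \<pi> ` S"
    then obtain L where L: "L \<in> S" "I = UU \<pi> L" by blast
    have Ls: "L \<subseteq> {1..k-1}" using L S by blast
    have "L \<noteq> {}" using R L by blast
    thus "is_hyperplane n I" unfolding is_hyperplane_def L(2) using U_empty[OF Ls] U_sub[OF Ls] by blast
  next
    show "lin_dep (UU \<pi> ` S)" using R U_lindep[OF S] by blast
  next
    fix D assume D: "D \<subset> UU \<pi> ` S"
    define D0 where "D0 = {L \<in> S. UU \<pi> L \<in> D}"
    have "D = UU \<pi> ` D0" unfolding D0_def using D by blast
    moreover have "D0 \<subset> S" unfolding D0_def using D by blast
    moreover have "D0 \<subseteq> Pow {1..k-1}" using S unfolding D0_def by blast
    ultimately show "\<not> lin_dep D" using R U_lindep by blast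
  qed
qed

lemma U_broken:
  assumes S: "S \<subseteq> Pow {1..k-1}"
  shows "is_broken_circuit n (UU \<pi> ` S) \<longleftrightarrow>
    (\<exists>L. L \<subseteq> {1..k-1} \<and> L \<notin> S \<and> {} \<notin> insert L S \<and> lin_dep (insert L S) \<and>
         (\<forall>D. D \<subset> insert L S \<longrightarrow> \<not> lin_dep D) \<and> (\<forall>M\<in>S. bin_code M \<le> bin_code L))"
  (is "?A \<longleftrightarrow> ?B")
proof
  assume ?B
  then obtain L where L: "L \<subseteq> {1..k-1}" "L \<notin> S" "{} \<notin> insert L S" "lin_dep (insert L S)"
    "\<forall>D. D \<subset> insert L S \<longrightarrow> \<not> lin_dep D" "\<forall>M\<in>S. bin_code M \<le> bin_code L" by blast
  have S': "insert L S \<subseteq> Pow {1..k-1}" using S L by blast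
  have inj: "inj_on (UU \<pi>) (insert L S)" using U_inj S' by (rule inj_on_subset)
  have C: "is_circuit n (UU \<pi> ` insert L S)" using U_circuit[OF S'] L by blast
  have nin: "UU \<pi> L \<notin> UU \<pi> ` S"
  proof
    assume "UU \<pi> L \<in> UU \<pi> ` S"
    then obtain M where "M \<in> S" "UU \<pi> M = UU \<pi> L" by blast
    hence "M = L" using inj by (meson inj_onD insertI1 insertI2)
    thus False using L \<open>M \<in> S\<close> by blast
  qed
  show ?A unfolding is_broken_circuit_def
  proof (intro exI conjI)
    show "is_circuit n (UU \<pi> ` insert L S)" by (rule C)
    show "UU \<pi> L \<in> UU \<pi> ` insert L S" by blast
    show "\<forall>H'\<in>UU \<pi> ` insert L S. bin_code H' \<le> bin_code (UU \<pi> L)"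
    proof
      fix H' assume "H' \<in> UU \<pi> ` insert L S"
      then obtain M where M: "M \<in> insert L S" "H' = UU \<pi> M" by blast
      show "bin_code H' \<le> bin_code (UU \<pi> L)"
      proof (cases "M = L")
        case True thus ?thesis using M by simp
      next
        case False
        hence "M \<in> S" using M by blast
        hence "bin_code M \<le> bin_code L" using L by blast
        thus ?thesis using U_order[OF _ L(1), of M] M S \<open>M \<in> S\<close> by blast
      qed
    qed
    show "UU \<pi> ` S = UU \<pi> ` insert L S - {UU \<pi> L}" using nin by auto
  qed
next
  assume ?A
  then obtain C H where C: "is_circuit n C" and H: "H \<in> C" and mx: "\<forall>H'\<in>C. bin_code H' \<le> bin_code H"
    and eq: "UU \<pi> ` S = C - {H}" unfolding is_broken_circuit_def by blast
  have inj: "inj_on (UU \<pi>) S" using U_inj S by (rule inj_on_subset)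
  have "C \<subseteq> Pow {1..n}" using C unfolding is_circuit_def is_hyperplane_def by blast
  hence finC: "finite C" by (rule finite_subset) simp
  obtain c where c1: "\<exists>I\<in>C. c I \<noteq> 0" and c2: "\<forall>j. (\<Sum>I\<in>C. c I * normal_vec I j) = 0"
    using C unfolding is_circuit_def lin_dep_def by blast
  have split: "(\<Sum>I\<in>C. c I * normal_vec I j) = c H * normal_vec H j + (\<Sum>I\<in>C-{H}. c I * normal_vec I j)" for j
    using sum.remove[OF finC H] .
  have cH: "c H \<noteq> 0"
  proof
    assume h0: "c H = 0"
    have "lin_dep (C - {H})" unfolding lin_dep_def
    proof (intro exI[of _ c] conjI allI)
      show "\<exists>I\<in>C - {H}. c I \<noteq> 0" using c1 h0 by blast
      fix j show "(\<Sum>I\<in>C-{H}. c I * normal_vec I j) = 0" using c2 split[of j] h0 by simp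
    qed
    moreover have "C - {H} \<subset> C" using H by blast
    ultimately show False using C unfolding is_circuit_def by blast
  qed
  define g where "g j = (\<Sum>L\<in>S. c (UU \<pi> L) * normal_vec (UU \<pi> L) j)" for j
  have gC: "(\<Sum>I\<in>C-{H}. c I * normal_vec I j) = g j" for j
    unfolding g_def eq[symmetric] using inj by (simp add: sum.reindex)
  have key: "c H * normal_vec H j = - g j" for j using c2 split[of j] gC[of j] by simp
  have g0: "g j = 0" if "\<forall>l\<in>{1..k-1}. j \<notin> block \<pi> l" for j
  proof -
    have "c (UU \<pi> L) * normal_vec (UU \<pi> L) j = 0" if "L \<in> S" for L
    proof -
      have "L \<subseteq> {1..k-1}" using S that by blast
      thus ?thesis using U_nv0 \<open>\<forall>l\<in>{1..k-1}. j \<notin> block \<pi> l\<close> by simp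
    qed
    thus ?thesis unfolding g_def by (intro sum.neutral) blast
  qed
  have gl: "g j = (\<Sum>L\<in>S. c (UU \<pi> L) * normal_vec L l)" if "l \<in> {1..k-1}" "j \<in> block \<pi> l" for j l
    unfolding g_def
  proof (rule sum.cong)
    fix L assume "L \<in> S"
    hence "L \<subseteq> {1..k-1}" using S by blast
    thus "c (UU \<pi> L) * normal_vec (UU \<pi> L) j = c (UU \<pi> L) * normal_vec L l" using U_nv[OF _ that] by simp
  qed simp
  define L where "L = {l \<in> {1..k-1}. H \<inter> block \<pi> l \<noteq> {}}"
  have Ls: "L \<subseteq> {1..k-1}" unfolding L_def by blast
  have HL: "H = UU \<pi> L"
  proof
    show "H \<subseteq> UU \<pi> L"
    proof
      fix j assume j: "j \<in> H"
      have "g j \<noteq> 0" using key[of j] cH j unfolding normal_vec_def by auto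
      then obtain l where l: "l \<in> {1..k-1}" "j \<in> block \<pi> l" using g0 by blast
      hence "l \<in> L" unfolding L_def using j by blast
      thus "j \<in> UU \<pi> L" using l U_mem by blast
    qed
    show "UU \<pi> L \<subseteq> H"
    proof
      fix j assume "j \<in> UU \<pi> L"
      then obtain l where l: "l \<in> L" "j \<in> block \<pi> l" using U_mem by blast
      have l1: "l \<in> {1..k-1}" using l L_def by blast
      obtain j' where j': "j' \<in> H" "j' \<in> block \<pi> l" using l(1) unfolding L_def by blast
      have "g j = g j'" using gl[OF l1 l(2)] gl[OF l1 j'(2)] by simp
      hence "c H * normal_vec H j = c H * normal_vec H j'" using key by simp
      also have "\<dots> = c H" using j' unfolding normal_vec_def by simp
      finally have "normal_vec H j \<noteq> 0" using cH by auto
      thus "j \<in> H" unfolding normal_vec_def by (auto split: if_splits)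
    qed
  qed
  have LS: "L \<notin> S"
  proof
    assume "L \<in> S"
    hence "H \<in> UU \<pi> ` S" using HL by blast
    thus False using eq by blast
  qed
  have Ceq: "C = UU \<pi> ` insert L S" using eq H HL by auto
  have S': "insert L S \<subseteq> Pow {1..k-1}" using S Ls by blast
  have circ: "{} \<notin> insert L S \<and> lin_dep (insert L S) \<and> (\<forall>D. D \<subset> insert L S \<longrightarrow> \<not> lin_dep D)"
    using U_circuit[OF S'] C Ceq by blast
  have ord: "\<forall>M\<in>S. bin_code M \<le> bin_code L"
  proof
    fix M assume M: "M \<in> S"
    hence "UU \<pi> M \<in> C" using Ceq by blast
    hence "bin_code (UU \<pi> M) \<le> bin_code (UU \<pi> L)" using mx HL by simp
    moreover have "M \<subseteq> {1..k-1}" using M S by blast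
    ultimately show "bin_code M \<le> bin_code L" using U_order[OF _ Ls] by blast
  qed
  show ?B using Ls LS circ ord by blast
qed

end

theorem proposition5p1:
  fixes i k n :: nat and f :: "nat \<Rightarrow> nat set" and \<pi> :: "nat set set"
  assumes "i \<ge> 1" and "i + 1 \<le> k" and "k \<le> 2 ^ i"
    and "is_prototype i k f"
    and "n \<ge> 1" and "is_partition_k {1..n+1} k \<pi>"
    and "is_broken_circuit n (A_hyps f i k \<pi>)"
  shows "\<forall>n' \<pi>'. n' \<ge> 1 \<longrightarrow> is_partition_k {1..n'+1} k \<pi>' \<longrightarrow>
           is_broken_circuit n' (A_hyps f i k \<pi>')"
proof (intro allI impI)
  fix n' \<pi>' assume "n' \<ge> 1" and P': "is_partition_k {1..n'+1} k \<pi>'"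
  interpret P: bsys n k \<pi> using assms(6) by unfold_locales
  interpret Q: bsys n' k \<pi>' using P' by unfold_locales
  define Bi where "Bi = building_block f k ` {1..i}"
  have eqA: "A_hyps f i k \<rho> = UU \<rho> ` Bi" for \<rho>
    unfolding Bi_def A_hyps_def A_set_def UU_def image_image by simp
  have S: "Bi \<subseteq> Pow {1..k-1}" unfolding Bi_def building_block_def by blast
  have "is_broken_circuit n (UU \<pi> ` Bi)" using assms(7) eqA by simp
  hence "\<exists>L. L \<subseteq> {1..k-1} \<and> L \<notin> Bi \<and> {} \<notin> insert L Bi \<and> lin_dep (insert L Bi) \<and>
         (\<forall>D. D \<subset> insert L Bi \<longrightarrow> \<not> lin_dep D) \<and> (\<forall>M\<in>Bi. bin_code M \<le> bin_code L)"
    using P.U_broken[OF S] by blast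
  hence "is_broken_circuit n' (UU \<pi>' ` Bi)" using Q.U_broken[OF S] by blast
  thus "is_broken_circuit n' (A_hyps f i k \<pi>')" using eqA by simp
qed

end
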